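(* Let $G$ be a graph with degree sequence $(d_1, \ldots, d_n)$, where $d_1 \geq d_2 \geq \cdots \geq d_n$. Let $\Sigma$ be a signed graph with underlying graph $G$. Then $$l(\Sigma) \leq \sum_{i=1}^{l_0(\Sigma)} \left\lfloor \frac{d_i}{2} \right\rfloor.$$
   Context: A signed graph $\Sigma = (G,\sigma)$ consists of a finite graph $G$ (loops and multiple edges allowed) and a sign function $\sigma: E(G) \to \{+1,-1\}$. A circle is a connected nonempty $2$-regular subgraph; it is positive if the product of the signs of its edges is $+1$ and negative otherwise. $\Sigma$ is balanced if all its circles are positive. The frustration index $l(\Sigma)$ is the smallest number of edges whose deletion from $\Sigma$ leaves a balanced signed graph. The frustration number $l_0(\Sigma)$ is the smallest number of vertices whose deletion (together with all incident edges) from $\Sigma$ leaves a balanced signed graph. *)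

theory Defs
  imports Main
begin

text \<open>A signed graph is given by a finite vertex set V, a finite edge set E,
an endpoint map ends (each edge has one endpoint (loop) or two endpoints;
multiple edges are allowed since edges are abstract) and a sign map into {1,-1}.\<close>

definition signed_graph :: "'v set \<Rightarrow> 'e set \<Rightarrow> ('e \<Rightarrow> 'v set) \<Rightarrow> ('e \<Rightarrow> int) \<Rightarrow> bool" where
  "signed_graph V E ends \<sigma> \<longleftrightarrow> finite V \<and> finite E \<and>
     (\<forall>e\<in>E. ends e \<subseteq> V \<and> card (ends e) \<in> {1,2} \<and> \<sigma> e \<in> {1,-1})"

definition deg_in :: "'e set \<Rightarrow> ('e \<Rightarrow> 'v set) \<Rightarrow> 'v \<Rightarrow> nat" where
  "deg_in C ends v = card {e\<in>C. v \<in> ends e \<and> card (ends e) = 2} + 2 * card {e\<in>C. ends e = {v}}"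

definition is_circle :: "('e \<Rightarrow> 'v set) \<Rightarrow> 'e set \<Rightarrow> bool" where
  "is_circle ends C \<longleftrightarrow> C \<noteq> {} \<and> finite C \<and>
     (\<forall>v\<in>\<Union>(ends ` C). deg_in C ends v = 2) \<and>
     (\<forall>u\<in>\<Union>(ends ` C). \<forall>v\<in>\<Union>(ends ` C). (\<lambda>x y. \<exists>e\<in>C. ends e = {x,y})\<^sup>*\<^sup>* u v)"

definition balanced :: "('e \<Rightarrow> 'v set) \<Rightarrow> ('e \<Rightarrow> int) \<Rightarrow> 'e set \<Rightarrow> bool" where
  "balanced ends \<sigma> F \<longleftrightarrow> (\<forall>C. C \<subseteq> F \<and> is_circle ends C \<longrightarrow> (\<Prod>e\<in>C. \<sigma> e) = 1)"

definition frustration_index :: "'e set \<Rightarrow> ('e \<Rightarrow> 'v set) \<Rightarrow> ('e \<Rightarrow> int) \<Rightarrow> nat" where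
  "frustration_index E ends \<sigma> = Min {card F | F. F \<subseteq> E \<and> balanced ends \<sigma> (E - F)}"

text \<open>Deleting a vertex set X removes all edges incident to X.\<close>
definition frustration_number :: "'v set \<Rightarrow> 'e set \<Rightarrow> ('e \<Rightarrow> 'v set) \<Rightarrow> ('e \<Rightarrow> int) \<Rightarrow> nat" where
  "frustration_number V E ends \<sigma> =
     Min {card X | X. X \<subseteq> V \<and> balanced ends \<sigma> {e\<in>E. ends e \<inter> X = {}}}"

end

theory Submission
  imports Defs
begin


definition cons :: "('e \<Rightarrow> 'v set) \<Rightarrow> ('e \<Rightarrow> int) \<Rightarrow> ('v \<Rightarrow> int) \<Rightarrow> 'e \<Rightarrow> bool" where
  "cons ends \<sigma> \<tau> e \<longleftrightarrow> \<sigma> e = (if card (ends e) = 2 then (\<Prod>w\<in>ends e. \<tau> w) else 1)"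

lemma pm1_even_pow: assumes "(t::int) \<in> {1,-1}" "even n" shows "t ^ n = 1"
proof -
  from assms(2) obtain k where "n = 2*k" by auto
  then have "t^n = (t^2)^k" by (simp add: power_mult)
  also have "t^2 = 1" using assms(1) by auto
  finally show ?thesis by simp
qed

lemma consistent_balanced:
  assumes cf: "\<forall>e\<in>F. cons ends \<sigma> \<tau> e" and tv: "\<forall>v. \<tau> v \<in> {1,-1}"
    and fin: "\<forall>e\<in>F. finite (ends e)"
  shows "balanced ends \<sigma> F"
  unfolding balanced_def
proof (intro allI impI)
  fix C assume "C \<subseteq> F \<and> is_circle ends C"
  then have CF: "C \<subseteq> F" and circ: "is_circle ends C" by auto
  have finC: "finite C" using circ unfolding is_circle_def by auto
  define U where "U = \<Union>(ends ` C)"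
  have finU: "finite U" unfolding U_def using finC fin CF by auto
  define C2 where "C2 = {e\<in>C. card (ends e) = 2}"
  have "(\<Prod>e\<in>C. \<sigma> e) = (\<Prod>e\<in>C. if card (ends e) = 2 then (\<Prod>w\<in>ends e. \<tau> w) else 1)"
    using cf CF by (intro prod.cong) (auto simp: cons_def)
  also have "\<dots> = (\<Prod>e\<in>C2. (\<Prod>w\<in>ends e. \<tau> w))"
    unfolding C2_def using finC by (simp add: prod.inter_filter)
  also have "\<dots> = (\<Prod>e\<in>C2. (\<Prod>w\<in>{w. w\<in>U \<and> w \<in> ends e}. \<tau> w))"
  proof (rule prod.cong[OF refl])
    fix e assume "e \<in> C2"
    then have "{w. w\<in>U \<and> w \<in> ends e} = ends e" by (auto simp: U_def C2_def)
    then show "(\<Prod>w\<in>ends e. \<tau> w) = (\<Prod>w\<in>{w. w\<in>U \<and> w \<in> ends e}. \<tau> w)" by simp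
  qed
  also have "\<dots> = (\<Prod>w\<in>U. (\<Prod>e\<in>{e. e\<in>C2 \<and> w \<in> ends e}. \<tau> w))"
    by (rule prod.swap_restrict) (use finC finU in \<open>auto simp: C2_def\<close>)
  also have "\<dots> = (\<Prod>w\<in>U. \<tau> w ^ card {e. e\<in>C2 \<and> w \<in> ends e})"
    by simp
  also have "\<dots> = (\<Prod>w\<in>U. 1)"
  proof (intro prod.cong refl pm1_even_pow)
    fix w assume wU: "w \<in> U"
    show "\<tau> w \<in> {1,-1}" using tv by auto
    have "deg_in C ends w = 2" using circ wU unfolding is_circle_def U_def by auto
    moreover have "{e. e\<in>C2 \<and> w \<in> ends e} = {e\<in>C. w \<in> ends e \<and> card (ends e) = 2}"
      by (auto simp: C2_def)
    ultimately show "even (card {e. e\<in>C2 \<and> w \<in> ends e})"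
      unfolding deg_in_def
    proof -
      assume a: "card {e \<in> C. w \<in> ends e \<and> card (ends e) = 2} + 2 * card {e \<in> C. ends e = {w}} = 2"
        and b: "{e. e\<in>C2 \<and> w \<in> ends e} = {e\<in>C. w \<in> ends e \<and> card (ends e) = 2}"
      have "\<And>a b::nat. a + 2*b = 2 \<Longrightarrow> even a" by presburger
      from this[OF a] show ?thesis by (simp only: b)
    qed
  qed
  finally show "(\<Prod>e\<in>C. \<sigma> e) = 1" by simp
qed



definition adj :: "('e \<Rightarrow> 'v set) \<Rightarrow> 'e set \<Rightarrow> 'v \<Rightarrow> 'v \<Rightarrow> bool" where
  "adj ends B x y \<longleftrightarrow> (\<exists>f\<in>B. card (ends f) = 2 \<and> ends f = {x,y})"

definition conn :: "('e \<Rightarrow> 'v set) \<Rightarrow> 'e set \<Rightarrow> 'v \<Rightarrow> 'v \<Rightarrow> bool" where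
  "conn ends S = (\<lambda>a b. \<exists>f\<in>S. ends f = {a,b})\<^sup>*\<^sup>*"

lemma reach_path:
  assumes "(adj ends B)\<^sup>*\<^sup>* u w"
  shows "\<exists>xs. distinct xs \<and> xs \<noteq> [] \<and> hd xs = u \<and> last xs = w \<and>
     (\<forall>i. Suc i < length xs \<longrightarrow> adj ends B (xs!i) (xs!Suc i))"
  using assms
proof (induction rule: rtranclp_induct)
  case base
  then show ?case by (intro exI[of _ "[u]"]) auto
next
  case (step w z)
  then obtain xs where xs: "distinct xs" "xs \<noteq> []" "hd xs = u" "last xs = w"
    "\<forall>i. Suc i < length xs \<longrightarrow> adj ends B (xs!i) (xs!Suc i)" by blast
  show ?case
  proof (cases "z \<in> set xs")
    case True
    then obtain j where j: "j < length xs" "xs!j = z" by (auto simp: in_set_conv_nth)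
    show ?thesis
    proof (intro exI[of _ "take (Suc j) xs"] conjI allI impI)
      show "distinct (take (Suc j) xs)" using xs by simp
      show "take (Suc j) xs \<noteq> []" using xs by simp
      show "hd (take (Suc j) xs) = u" using xs by simp
      show "last (take (Suc j) xs) = z" using j by (simp add: take_Suc_conv_app_nth)
      fix i assume "Suc i < length (take (Suc j) xs)"
      then show "adj ends B (take (Suc j) xs ! i) (take (Suc j) xs ! Suc i)"
        using xs(5) j by auto
    qed
  next
    case False
    show ?thesis
    proof (intro exI[of _ "xs @ [z]"] conjI allI impI)
      show "distinct (xs @ [z])" using xs False by simp
      show "xs @ [z] \<noteq> []" by simp
      show "hd (xs @ [z]) = u" using xs by simp
      show "last (xs @ [z]) = z" by simp
      fix i assume i: "Suc i < length (xs @ [z])"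
      show "adj ends B ((xs @ [z]) ! i) ((xs @ [z]) ! Suc i)"
      proof (cases "Suc i < length xs")
        case True then show ?thesis using xs(5) by (simp add: nth_append)
      next
        case False
        then have "Suc i = length xs" using i by simp
        then have "xs ! i = w" using xs(2,4) by (metis diff_Suc_1 last_conv_nth)
        then show ?thesis using \<open>Suc i = length xs\<close> step.hyps(2) \<open>Suc i = length xs\<close>
          by (simp add: nth_append)
      qed
    qed
  qed
qed

lemma conn_sym: assumes "conn ends S x y" shows "conn ends S y x"
  using assms unfolding conn_def
proof (induction rule: rtranclp_induct)
  case base then show ?case by simp
next
  case (step y z)
  then have "(\<lambda>a b. \<exists>f\<in>S. ends f = {a,b}) z y" by (auto simp: insert_commute)
  then show ?case using step.IH by (rule converse_rtranclp_into_rtranclp)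
qed

lemma conn_mono: assumes "conn ends S x y" "S \<subseteq> T" shows "conn ends T x y"
  using assms(1) unfolding conn_def
proof (induction rule: rtranclp_induct)
  case base then show ?case by simp
next
  case (step y z)
  show ?case by (rule rtranclp.rtrancl_into_rtrancl[OF step.IH]) (use step.hyps(2) assms(2) in blast)
qed

lemma distinct_hd_last: "distinct xs \<Longrightarrow> 2 \<le> length xs \<Longrightarrow> hd xs \<noteq> last xs"
  by (cases xs) (auto simp: last_in_set)

lemma prod2: "x \<noteq> y \<Longrightarrow> (\<Prod>w\<in>{x,y}. (\<tau>::'v\<Rightarrow>int) w) = \<tau> x * \<tau> y" by simp

lemma path_edges:
  assumes "distinct xs" "2 \<le> length xs"
    and "\<forall>i. Suc i < length xs \<longrightarrow> adj ends B (xs!i) (xs!Suc i)"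
    and cB: "\<forall>e\<in>B. cons ends \<sigma> \<tau> e" and tv: "\<forall>v. \<tau> v \<in> {1,-1}"
  shows "\<exists>S\<subseteq>B. finite S \<and> (\<forall>f\<in>S. card (ends f) = 2) \<and> \<Union>(ends ` S) = set xs \<and>
     (\<forall>w. card {f\<in>S. w \<in> ends f} = (if w = hd xs \<or> w = last xs then 1 else if w \<in> set xs then 2 else 0)) \<and>
     (\<forall>w\<in>set xs. conn ends S (hd xs) w) \<and> (\<Prod>f\<in>S. \<sigma> f) = \<tau> (hd xs) * \<tau> (last xs)"
  using assms(1-3)
proof (induction xs)
  case Nil then show ?case by simp
next
  case (Cons a ys)
  then obtain b zs where ys: "ys = b # zs" by (cases ys) auto
  from Cons.prems(3) have "adj ends B a b" using ys by (metis Suc_less_eq length_Cons nth_Cons_0 nth_Cons_Suc zero_less_Suc)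
  then obtain f where f: "f \<in> B" "card (ends f) = 2" "ends f = {a,b}" unfolding adj_def by blast
  have ab: "a \<noteq> b" using Cons.prems(1) ys by auto
  have sf: "\<sigma> f = \<tau> a * \<tau> b" using cB f ab unfolding cons_def by auto
  show ?case
  proof (cases zs)
    case Nil
    show ?thesis
    proof (intro exI[of _ "{f}"] conjI allI ballI)
      fix w
      have "{g\<in>{f}. w \<in> ends g} = (if w \<in> ends f then {f} else {})" by auto
      then show "card {g\<in>{f}. w \<in> ends g} = (if w = hd (a#ys) \<or> w = last (a#ys) then 1 else if w \<in> set (a#ys) then 2 else 0)"
        using f ys Nil by auto
    next
      fix w assume "w \<in> set (a#ys)"
      then have "w = a \<or> w = b" using ys Nil by auto
      then show "conn ends {f} (hd (a#ys)) w" unfolding conn_def using f by auto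
    qed (use f ys Nil sf in auto)
  next
    case (Cons c cs)
    have "distinct ys" "2 \<le> length ys" using Cons.prems ys \<open>zs = c # cs\<close> by auto
    moreover have "\<forall>i. Suc i < length ys \<longrightarrow> adj ends B (ys!i) (ys!Suc i)"
      using Cons.prems(3) by auto
    ultimately obtain S where S: "S \<subseteq> B" "finite S" "\<forall>f\<in>S. card (ends f) = 2" "\<Union>(ends ` S) = set ys"
      "\<forall>w. card {f\<in>S. w \<in> ends f} = (if w = hd ys \<or> w = last ys then 1 else if w \<in> set ys then 2 else 0)"
      "\<forall>w\<in>set ys. conn ends S (hd ys) w" "(\<Prod>f\<in>S. \<sigma> f) = \<tau> (hd ys) * \<tau> (last ys)"
      using Cons.IH by blast
    have ays: "a \<notin> set ys" using Cons.prems(1) by simp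
    have fS: "f \<notin> S" using S(4) f ays by auto
    have hl: "hd ys \<noteq> last ys" using distinct_hd_last[OF \<open>distinct ys\<close> \<open>2 \<le> length ys\<close>] .
    have hb: "hd ys = b" using ys by simp
    have lst: "last (a#ys) = last ys" using ys by simp
    show ?thesis
    proof (intro exI[of _ "insert f S"] conjI)
      show "insert f S \<subseteq> B" using S f by auto
      show "finite (insert f S)" using S by auto
      show "\<Union>(ends ` insert f S) = set (a#ys)" using S f ys by auto
      show "\<forall>g\<in>insert f S. card (ends g) = 2" using S f by auto
    next
      show "\<forall>w. card {g\<in>insert f S. w \<in> ends g} = (if w = hd (a#ys) \<or> w = last (a#ys) then 1 else if w \<in> set (a#ys) then 2 else 0)"
      proof
      fix w
      have eq: "{g\<in>insert f S. w \<in> ends g} = (if w \<in> ends f then insert f {g\<in>S. w \<in> ends g} else {g\<in>S. w \<in> ends g})"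
        by auto
      have "card {g\<in>insert f S. w \<in> ends g} = card {g\<in>S. w \<in> ends g} + (if w \<in> {a,b} then 1 else 0)"
        unfolding eq using S(2) fS f by auto
      moreover have "card {g\<in>S. w \<in> ends g} = 0" if "w = a"
        using S(5) ays that ys by (auto simp: last_in_set)
      ultimately show "card {g\<in>insert f S. w \<in> ends g} = (if w = hd (a#ys) \<or> w = last (a#ys) then 1 else if w \<in> set (a#ys) then 2 else 0)"
        using S(5) hl hb lst ays ab ys by (cases "w = a") (auto simp: last_in_set)
      qed
    next
      show "\<forall>w\<in>set (a#ys). conn ends (insert f S) (hd (a#ys)) w"
      proof
      fix w assume w: "w \<in> set (a#ys)"
      show "conn ends (insert f S) (hd (a#ys)) w"
      proof (cases "w = a")
        case True then show ?thesis by (simp add: conn_def)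
      next
        case False
        then have "w \<in> set ys" using w by simp
        then have "conn ends (insert f S) b w" using S(6) hb conn_mono by (metis subset_insertI)
        moreover have "(\<lambda>a b. \<exists>f\<in>insert f S. ends f = {a,b}) a b" using f by auto
        ultimately show ?thesis unfolding conn_def by (simp add: converse_rtranclp_into_rtranclp)
      qed
      qed
    next
      have "\<tau> b * \<tau> b = 1" using tv by (metis insertE mult_minus1 mult_1 empty_iff minus_minus)
      then show "(\<Prod>g\<in>insert f S. \<sigma> g) = \<tau> (hd (a#ys)) * \<tau> (last (a#ys))"
        using S(2,7) fS sf hb lst by (simp add: algebra_simps)
    qed
  qed
qed



lemma balanced_mono: "balanced ends \<sigma> B \<Longrightarrow> A \<subseteq> B \<Longrightarrow> balanced ends \<sigma> A"
  unfolding balanced_def by blast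

lemma pm1_cases: "(x::int) \<in> {1,-1} \<Longrightarrow> x = 1 \<or> x = -1" by auto

lemma balanced_switching:
  assumes "finite B" "\<forall>e\<in>B. card (ends e) \<in> {1,2} \<and> \<sigma> e \<in> {1,-1}"
    and "balanced ends \<sigma> B"
  shows "\<exists>\<tau>. (\<forall>v. \<tau> v \<in> {1,-1}) \<and> (\<forall>e\<in>B. cons ends \<sigma> \<tau> e)"
  using assms
proof (induction B rule: finite_induct)
  case empty
  then show ?case by (intro exI[of _ "\<lambda>_. 1"]) auto
next
  case (insert e B')
  have balB: "balanced ends \<sigma> (insert e B')" using insert.prems by blast
  then have "balanced ends \<sigma> B'" using balanced_mono by blast
  then obtain \<tau>' where tv: "\<forall>v. \<tau>' v \<in> {1,-1}" and cB: "\<forall>e\<in>B'. cons ends \<sigma> \<tau>' e"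
    using insert.IH insert.prems by blast
  have se: "\<sigma> e \<in> {1,-1}" "card (ends e) \<in> {1,2}" using insert.prems by auto
  show ?case
  proof (cases "cons ends \<sigma> \<tau>' e")
    case True then show ?thesis using tv cB by blast
  next
    case incons: False
    show ?thesis
    proof (cases "card (ends e) = 1")
      case True
      then obtain v where v: "ends e = {v}" by (meson card_1_singletonE)
      have "\<sigma> e = -1" using incons True se unfolding cons_def by auto
      moreover have "is_circle ends {e}"
      proof -
        have "{ea. ea = e \<and> v \<in> ends ea \<and> card (ends ea) = 2} = {}" using v by auto
        moreover have "{ea. ea = e \<and> ends ea = {v}} = {e}" using v by auto
        ultimately show ?thesis unfolding is_circle_def deg_in_def using v by auto
      qed
      ultimately show ?thesis using balB unfolding balanced_def by force
    next
      case False
      then have c2: "card (ends e) = 2" using se by auto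
      then obtain u v where uv: "ends e = {u,v}" "u \<noteq> v" by (meson card_2_iff)
      have tuv: "\<tau>' u = 1 \<or> \<tau>' u = -1" "\<tau>' v = 1 \<or> \<tau>' v = -1" using tv by auto
      have inc: "\<sigma> e = - (\<tau>' u * \<tau>' v)"
        using incons c2 uv se tuv unfolding cons_def by auto
      define K where "K = {w. (adj ends B')\<^sup>*\<^sup>* u w}"
      show ?thesis
      proof (cases "v \<in> K")
        case True
        then obtain xs where xs: "distinct xs" "xs \<noteq> []" "hd xs = u" "last xs = v"
          "\<forall>i. Suc i < length xs \<longrightarrow> adj ends B' (xs!i) (xs!Suc i)"
          using reach_path[of ends B' u v] unfolding K_def by blast
        have "2 \<le> length xs"
        proof (rule ccontr)
          assume "\<not> 2 \<le> length xs"
          then have "length xs = 1" using xs(2) by (cases xs) (auto simp: Suc_le_eq)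
          then have "hd xs = last xs" by (cases xs) auto
          then show False using xs uv by simp
        qed
        then obtain S where S: "S\<subseteq>B'" "finite S" "\<forall>f\<in>S. card (ends f) = 2" "\<Union>(ends ` S) = set xs"
          "\<forall>w. card {f\<in>S. w \<in> ends f} = (if w = hd xs \<or> w = last xs then 1 else if w \<in> set xs then 2 else 0)"
          "\<forall>w\<in>set xs. conn ends S (hd xs) w" "(\<Prod>f\<in>S. \<sigma> f) = \<tau>' (hd xs) * \<tau>' (last xs)"
          using path_edges[OF xs(1) _ xs(5) cB tv] by blast
        have eS: "e \<notin> S" using S(1) insert.hyps(2) by blast
        have uxs: "u \<in> set xs" "v \<in> set xs" using xs by (auto simp: last_in_set)
        define C where "C = insert e S"
        have CU: "\<Union>(ends ` C) = set xs" unfolding C_def using S(4) uv uxs by auto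
        have connC: "conn ends C u w" if "w \<in> set xs" for w
          using S(6) that xs(3) conn_mono[of ends S u w C] unfolding C_def by blast
        have circ: "is_circle ends C"
          unfolding is_circle_def
        proof (intro conjI ballI)
          show "C \<noteq> {}" "finite C" using S(2) unfolding C_def by auto
        next
          fix w assume w: "w \<in> \<Union>(ends ` C)"
          have l: "{f\<in>C. ends f = {w}} = {}" using S(3) c2 unfolding C_def by auto
          have "{f\<in>C. w \<in> ends f \<and> card (ends f) = 2} = (if w \<in> {u,v} then insert e {f\<in>S. w \<in> ends f} else {f\<in>S. w \<in> ends f})"
            using S(3) c2 uv unfolding C_def by auto
          then have "card {f\<in>C. w \<in> ends f \<and> card (ends f) = 2} = card {f\<in>S. w \<in> ends f} + (if w \<in> {u,v} then 1 else 0)"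
            using S(2) eS by auto
          moreover have "w \<in> set xs" using w CU by simp
          moreover have "card {f\<in>S. w \<in> ends f} = (if w = u \<or> w = v then 1 else if w \<in> set xs then 2 else 0)"
            using S(5) xs(3,4) by simp
          ultimately show "deg_in C ends w = 2" unfolding deg_in_def l by (simp split: if_splits)
        next
          fix w1 w2 assume "w1 \<in> \<Union>(ends ` C)" "w2 \<in> \<Union>(ends ` C)"
          then have "w1 \<in> set xs" "w2 \<in> set xs" using CU by auto
          then have "conn ends C w1 u" "conn ends C u w2" using connC conn_sym[of ends C u w1] by auto
          then show "(\<lambda>x y. \<exists>e\<in>C. ends e = {x, y})\<^sup>*\<^sup>* w1 w2" unfolding conn_def by (rule rtranclp_trans)
        qed
        have "(\<Prod>f\<in>C. \<sigma> f) = \<sigma> e * (\<tau>' u * \<tau>' v)" unfolding C_def using S(2,7) eS xs by simp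
        also have "\<dots> = -1" using inc tuv by auto
        finally have "(\<Prod>f\<in>C. \<sigma> f) \<noteq> 1" by simp
        moreover have "C \<subseteq> insert e B'" unfolding C_def using S(1) by auto
        ultimately show ?thesis using balB circ unfolding balanced_def by blast
      next
        case False
        define \<tau> where "\<tau> = (\<lambda>w. if w \<in> K then - \<tau>' w else \<tau>' w)"
        have uK: "u \<in> K" unfolding K_def by simp
        have Kcl: "x \<in> K \<longleftrightarrow> y \<in> K" if "adj ends B' x y" for x y
        proof -
          have "adj ends B' y x" using that unfolding adj_def by (auto simp: insert_commute)
          then show ?thesis using that unfolding K_def
            by (auto intro: rtranclp.rtrancl_into_rtrancl)
        qed
        show ?thesis
        proof (intro exI[of _ \<tau>] conjI ballI allI)
          fix w show "\<tau> w \<in> {1,-1}" using tv[rule_format, of w] unfolding \<tau>_def by auto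
        next
          fix f assume f: "f \<in> insert e B'"
          show "cons ends \<sigma> \<tau> f"
          proof (cases "f = e")
            case True
            then show ?thesis using inc c2 uv uK False unfolding cons_def \<tau>_def by simp
          next
            case fne: False
            then have fB: "f \<in> B'" using f by auto
            show ?thesis
            proof (cases "card (ends f) = 2")
              case True
              then obtain x y where xy: "ends f = {x,y}" "x \<noteq> y" by (meson card_2_iff)
              then have "adj ends B' x y" using fB True unfolding adj_def by blast
              then have "x \<in> K \<longleftrightarrow> y \<in> K" by (rule Kcl)
              then have "\<tau> x * \<tau> y = \<tau>' x * \<tau>' y" unfolding \<tau>_def by auto
              then show ?thesis using cB fB xy True unfolding cons_def by simp
            next
              case False
              then show ?thesis using cB fB unfolding cons_def by simp
            qed
          qed
        qed
      qed
    qed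
  qed
qed



lemma sorted_sum_le:
  fixes g :: "nat \<Rightarrow> nat"
  assumes "\<And>i j. 1 \<le> i \<Longrightarrow> i \<le> j \<Longrightarrow> j \<le> n \<Longrightarrow> g j \<le> g i"
    and "I \<subseteq> {1..n}" and "card I = k"
  shows "sum g I \<le> sum g {1..k}"
  using assms
proof (induction k arbitrary: I n)
  case 0
  then have "finite I" using finite_subset by blast
  then have "I = {}" using 0 by simp
  then show ?case by simp
next
  case (Suc k)
  have fI: "finite I" using Suc.prems(2) finite_subset by blast
  then have ne: "I \<noteq> {}" using Suc.prems(3) by auto
  define m where "m = Max I"
  have mI: "m \<in> I" unfolding m_def using fI ne by simp
  have Im: "I \<subseteq> {1..m}" using Suc.prems(2) fI unfolding m_def by auto
  have "Suc k \<le> m" using card_mono[OF _ Im] Suc.prems(3) by simp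
  have mn: "m \<le> n" using mI Suc.prems(2) by auto
  have I': "I - {m} \<subseteq> {1..m - 1}" using Im mI by auto
  have "card (I - {m}) = k" using Suc.prems(3) mI fI by simp
  then have "sum g (I - {m}) \<le> sum g {1..k}"
    using Suc.IH[OF _ I'] Suc.prems(1) mn by simp
  moreover have "g m \<le> g (Suc k)" using Suc.prems(1) \<open>Suc k \<le> m\<close> mn by simp
  moreover have "sum g I = g m + sum g (I - {m})" using fI mI by (simp add: sum.remove)
  ultimately show ?case by simp
qed



lemma cons_cong: "(\<forall>w\<in>ends e. \<tau> w = \<tau>' w) \<Longrightarrow> cons ends \<sigma> \<tau> e = cons ends \<sigma> \<tau>' e"
  unfolding cons_def by (metis (no_types, lifting) prod.cong)

theorem proposition2:
  fixes V :: "'v set" and E :: "'e set" and ends :: "'e \<Rightarrow> 'v set"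
    and \<sigma> :: "'e \<Rightarrow> int" and d :: "nat \<Rightarrow> 'v"
  assumes "signed_graph V E ends \<sigma>"
    and "bij_betw d {1..card V} V"
    and "\<And>i j. 1 \<le> i \<Longrightarrow> i \<le> j \<Longrightarrow> j \<le> card V \<Longrightarrow> deg_in E ends (d j) \<le> deg_in E ends (d i)"
  shows "frustration_index E ends \<sigma> \<le>
           (\<Sum>i=1..frustration_number V E ends \<sigma>. deg_in E ends (d i) div 2)"
proof -
  have fV: "finite V" and fE: "finite E"
    and eV: "\<And>e. e \<in> E \<Longrightarrow> ends e \<subseteq> V" and ec: "\<And>e. e \<in> E \<Longrightarrow> card (ends e) \<in> {1,2}"
    and es: "\<And>e. e \<in> E \<Longrightarrow> \<sigma> e \<in> {1,-1}"
    using assms(1) unfolding signed_graph_def by auto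
  have efin: "\<And>e. e \<in> E \<Longrightarrow> finite (ends e)"
    using ec by (metis card.infinite empty_iff insert_iff zero_neq_numeral zero_neq_one)
  have ene: "\<And>e. e \<in> E \<Longrightarrow> ends e \<noteq> {}" using ec by fastforce
  define k where "k = frustration_number V E ends \<sigma>"
  define SX where "SX = {card X | X. X \<subseteq> V \<and> balanced ends \<sigma> {e\<in>E. ends e \<inter> X = {}}}"
  have "{e\<in>E. ends e \<inter> V = {}} = {}" using eV ene by blast
  then have "balanced ends \<sigma> {e\<in>E. ends e \<inter> V = {}}" unfolding balanced_def is_circle_def by auto
  then have "card V \<in> SX" unfolding SX_def by auto
  moreover have "finite SX" unfolding SX_def
    by (rule finite_subset[of _ "card ` Pow V"]) (use fV in auto)
  ultimately have "k \<in> SX" unfolding k_def frustration_number_def SX_def[symmetric]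
    using Min_in by blast
  then obtain X where X: "X \<subseteq> V" "balanced ends \<sigma> {e\<in>E. ends e \<inter> X = {}}" "card X = k"
    unfolding SX_def by blast
  define B where "B = {e\<in>E. ends e \<inter> X = {}}"
  have "\<exists>\<tau>. (\<forall>v. \<tau> v \<in> {1,-1}) \<and> (\<forall>e\<in>B. cons ends \<sigma> \<tau> e)"
    by (rule balanced_switching) (use fE ec es X(2) in \<open>auto simp: B_def\<close>)
  then obtain \<tau>0 where t0: "\<forall>v. \<tau>0 v \<in> {1,-1}" "\<forall>e\<in>B. cons ends \<sigma> \<tau>0 e" by blast
  define T where "T = {\<tau>. (\<forall>v. \<tau> v \<in> {1::int,-1}) \<and> (\<forall>v. v \<notin> X \<longrightarrow> \<tau> v = \<tau>0 v)}"
  define inc where "inc = (\<lambda>\<tau>. {e\<in>E. \<not> cons ends \<sigma> \<tau> e})"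
  have "\<tau>0 \<in> T" using t0 unfolding T_def by auto
  then obtain \<tau> where tT: "\<tau> \<in> T" and tmin: "\<And>\<tau>'. \<tau>' \<in> T \<Longrightarrow> card (inc \<tau>) \<le> card (inc \<tau>')"
    using ex_has_least_nat[of "\<lambda>t. t \<in> T" \<tau>0 "\<lambda>t. card (inc t)"] by blast
  define F where "F = inc \<tau>"
  have FE: "F \<subseteq> E" unfolding F_def inc_def by auto
  have tv: "\<forall>v. \<tau> v \<in> {1,-1}" using tT unfolding T_def by auto
  have "balanced ends \<sigma> (E - F)"
    by (rule consistent_balanced[OF _ tv]) (use efin in \<open>auto simp: F_def inc_def\<close>)
  then have fi: "frustration_index E ends \<sigma> \<le> card F"
    unfolding frustration_index_def
    by (intro Min_le) (use FE fE in \<open>auto intro: finite_subset[of _ "card ` Pow E"]\<close>)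
  define deg where "deg = (\<lambda>x. deg_in E ends x)"
  have Fsub: "F \<subseteq> (\<Union>x\<in>X. {e\<in>F. x \<in> ends e})"
  proof
    fix e assume eF: "e \<in> F"
    show "e \<in> (\<Union>x\<in>X. {e\<in>F. x \<in> ends e})"
    proof (rule ccontr)
      assume "e \<notin> (\<Union>x\<in>X. {e\<in>F. x \<in> ends e})"
      then have "ends e \<inter> X = {}" using eF by auto
      then have eB: "e \<in> B" using eF FE unfolding B_def by auto
      have "\<forall>w\<in>ends e. \<tau> w = \<tau>0 w" using tT \<open>ends e \<inter> X = {}\<close> unfolding T_def by auto
      then have "cons ends \<sigma> \<tau> e" using cons_cong t0(2) eB by metis
      then show False using eF unfolding F_def inc_def by auto
    qed
  qed
  have fX: "finite X" using X(1) fV finite_subset by blast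
  have perx: "card {e\<in>F. x \<in> ends e} \<le> deg x div 2" if xX: "x \<in> X" for x
  proof -
    define L where "L = {e\<in>E. ends e = {x}}"
    define M where "M = {e\<in>E. x \<in> ends e \<and> card (ends e) = 2}"
    have fM: "finite M" "finite L" "finite F" using fE FE finite_subset unfolding M_def L_def by auto
    have degx: "deg x = card M + 2 * card L" unfolding deg_def deg_in_def M_def L_def by simp
    have "{e\<in>F. x \<in> ends e} \<subseteq> L \<union> (F \<inter> M)"
    proof
      fix e assume e: "e \<in> {e\<in>F. x \<in> ends e}"
      then have "e \<in> E" using FE by auto
      then have "card (ends e) = 1 \<or> card (ends e) = 2" using ec by auto
      then show "e \<in> L \<union> (F \<inter> M)"
      proof
        assume "card (ends e) = 1"
        then obtain y where "ends e = {y}" by (meson card_1_singletonE)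
        then show ?thesis using e \<open>e \<in> E\<close> unfolding L_def by auto
      qed (use e \<open>e \<in> E\<close> in \<open>auto simp: M_def\<close>)
    qed
    then have c1: "card {e\<in>F. x \<in> ends e} \<le> card L + card (F \<inter> M)"
      by (meson card_Un_le card_mono fM finite_UnI finite_Int order_trans)
    define \<tau>' where "\<tau>' = \<tau>(x := - \<tau> x)"
    have "\<tau>' \<in> T" using tT xX unfolding T_def \<tau>'_def by auto
    then have le: "card F \<le> card (inc \<tau>')" using tmin unfolding F_def by blast
    have inc': "inc \<tau>' = (F - M) \<union> (M - F)"
    proof -
      have "cons ends \<sigma> \<tau>' e \<longleftrightarrow> (if e \<in> M then \<not> cons ends \<sigma> \<tau> e else cons ends \<sigma> \<tau> e)"
        if eE: "e \<in> E" for e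
      proof (cases "e \<in> M")
        case True
        then have c2: "card (ends e) = 2" and xe: "x \<in> ends e" unfolding M_def by auto
        then obtain y where y: "ends e = {x,y}" "x \<noteq> y"
          by (metis card_2_iff insert_commute insert_iff singletonD)
        have "\<tau>' x * \<tau>' y = - (\<tau> x * \<tau> y)" using y unfolding \<tau>'_def by simp
        moreover have "\<tau> x \<in> {1,-1}" "\<tau> y \<in> {1,-1}" "\<sigma> e \<in> {1,-1}" using tv es eE by auto
        ultimately show ?thesis using True c2 y unfolding cons_def by auto
      next
        case False
        show ?thesis
        proof (cases "x \<in> ends e")
          case True
          then have "card (ends e) \<noteq> 2" using False eE unfolding M_def by auto
          then show ?thesis using False unfolding cons_def by simp
        next
          case xn: False
          have "\<forall>w\<in>ends e. \<tau>' w = \<tau> w" using xn unfolding \<tau>'_def by auto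
          then show ?thesis using False cons_cong[of ends e \<tau>' \<tau> \<sigma>] by simp
        qed
      qed
      note h = this
      have ME: "M \<subseteq> E" unfolding M_def by auto
      show ?thesis
      proof (rule set_eqI)
        fix e
        show "e \<in> inc \<tau>' \<longleftrightarrow> e \<in> (F - M) \<union> (M - F)"
        proof (cases "e \<in> E")
          case True
          then show ?thesis using h[OF True] unfolding F_def inc_def by (cases "e \<in> M") auto
        next
          case False
          then show ?thesis using ME FE unfolding inc_def by auto
        qed
      qed
    qed
    have "card (inc \<tau>') = card (F - M) + card (M - F)" unfolding inc'
      by (rule card_Un_disjoint) (use fM in auto)
    moreover have "card F = card (F - M) + card (F \<inter> M)"
    proof -
      have "F = (F - M) \<union> (F \<inter> M)" by blast
      then have "card F = card ((F - M) \<union> (F \<inter> M))" by simp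
      also have "\<dots> = card (F - M) + card (F \<inter> M)" by (rule card_Un_disjoint) (use fM in auto)
      finally show ?thesis .
    qed
    moreover have "card M = card (M - F) + card (F \<inter> M)"
    proof -
      have "M = (M - F) \<union> (F \<inter> M)" by blast
      then have "card M = card ((M - F) \<union> (F \<inter> M))" by simp
      also have "\<dots> = card (M - F) + card (F \<inter> M)" by (rule card_Un_disjoint) (use fM in auto)
      finally show ?thesis .
    qed
    ultimately have "2 * card (F \<inter> M) \<le> card M" using le by linarith
    then have "card (F \<inter> M) \<le> card M div 2" by linarith
    then show ?thesis using c1 degx by linarith
  qed
  have "card F \<le> card (\<Union>x\<in>X. {e\<in>F. x \<in> ends e})"
    by (rule card_mono[OF _ Fsub], rule finite_subset[OF _ finite_subset[OF FE fE]]) blast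
  also have "\<dots> \<le> (\<Sum>x\<in>X. card {e\<in>F. x \<in> ends e})" by (rule card_UN_le[OF fX])
  also have "\<dots> \<le> (\<Sum>x\<in>X. deg x div 2)" by (rule sum_mono) (use perx in auto)
  also have "\<dots> \<le> (\<Sum>i=1..k. deg_in E ends (d i) div 2)"
  proof -
    define I where "I = {i\<in>{1..card V}. d i \<in> X}"
    have XI: "X = d ` I"
    proof
      show "d ` I \<subseteq> X" unfolding I_def by auto
      show "X \<subseteq> d ` I"
      proof
        fix x assume "x \<in> X"
        then have "x \<in> d ` {1..card V}" using assms(2) X(1) unfolding bij_betw_def by auto
        then obtain i where "i \<in> {1..card V}" "x = d i" by blast
        then show "x \<in> d ` I" unfolding I_def using \<open>x \<in> X\<close> by blast
      qed
    qed
    have injI: "inj_on d I" using assms(2) unfolding I_def bij_betw_def by (auto intro: inj_on_subset)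
    have "(\<Sum>x\<in>X. deg x div 2) = (\<Sum>i\<in>I. deg (d i) div 2)" unfolding XI using sum.reindex[OF injI] by simp
    also have "\<dots> \<le> (\<Sum>i=1..k. deg (d i) div 2)"
    proof (rule sorted_sum_le[where n = "card V"])
      show "I \<subseteq> {1..card V}" unfolding I_def by auto
      show "card I = k" using X(3) XI card_image[OF injI] by simp
      fix i j :: nat assume "1 \<le> i" "i \<le> j" "j \<le> card V"
      then show "deg (d j) div 2 \<le> deg (d i) div 2" using assms(3) div_le_mono unfolding deg_def by blast
    qed
    finally show ?thesis unfolding deg_def .
  qed
  finally show ?thesis using fi unfolding k_def by simp
qed

end
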